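(* Consider the clique inference problem with a max-like clique potential $C(\mathbf{v})=\max_{v\in V} f_v(n_v(\mathbf{v}))$, where each $f_v:\{0,1,\dots,n\}\to\mathbb{R}$ is non-decreasing. Then the $\alpha$-pass algorithm returns an assignment maximizing $F$ (a MAP assignment).
   Context: Clique inference problem: there are $n$ vertices $1,\dots,n$, a finite set $V$ of values, real vertex potentials $\psi_{jv}$ ($1\le j\le n$, $v\in V$), and a symmetric clique potential $C$, i.e. $C(v_1,\dots,v_n)$ depends only on the counts $n_v(\mathbf{v})=|\{j:v_j=v\}|$. The objective is to maximize $F(\mathbf{v})=\sum_{j=1}^n\psi_{jv_j}+C(\mathbf{v})$ over $\mathbf{v}\in V^n$. The $\alpha$-pass algorithm: for each $\alpha\in V$, sort the vertices in decreasing order of $\psi_{j\alpha}-\max_{v\neq\alpha}\psi_{jv}$; for each $k\in\{1,\dots,n\}$ form the assignment $\mathbf{v}^{\alpha,k}$ that gives the first $k$ sorted vertices the value $\alpha$ and every other vertex its best non-$\alpha$ value (a $v\ne\alpha$ maximizing $\psi_{jv}$); output the assignment $\mathbf{v}^{\alpha,k}$ with the largest value of $F$ over all $\alpha\in V$ and $1\le k\le n$. *)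

theory Defs
  imports Complex_Main
begin

text \<open>Assignments of values to the vertices 1..n are functions nat => 'v;
only their values on {1..n} matter.\<close>

definition assignments :: "nat \<Rightarrow> 'v set \<Rightarrow> (nat \<Rightarrow> 'v) set" where
  "assignments n V = {x. \<forall>j\<in>{1..n}. x j \<in> V}"

definition val_count :: "nat \<Rightarrow> (nat \<Rightarrow> 'v) \<Rightarrow> 'v \<Rightarrow> nat" where
  "val_count n x v = card {j\<in>{1..n}. x j = v}"

definition max_clique_pot :: "nat \<Rightarrow> 'v set \<Rightarrow> ('v \<Rightarrow> nat \<Rightarrow> real) \<Rightarrow> (nat \<Rightarrow> 'v) \<Rightarrow> real" where
  "max_clique_pot n V f x = Max ((\<lambda>v. f v (val_count n x v)) ` V)"

definition objF :: "nat \<Rightarrow> (nat \<Rightarrow> 'v \<Rightarrow> real) \<Rightarrow> ((nat \<Rightarrow> 'v) \<Rightarrow> real) \<Rightarrow> (nat \<Rightarrow> 'v) \<Rightarrow> real" where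
  "objF n psi C x = (\<Sum>j=1..n. psi j (x j)) + C x"

definition alpha_key :: "'v set \<Rightarrow> (nat \<Rightarrow> 'v \<Rightarrow> real) \<Rightarrow> 'v \<Rightarrow> nat \<Rightarrow> real" where
  "alpha_key V psi \<alpha> j = psi j \<alpha> - Max (psi j ` (V - {\<alpha>}))"

definition is_alpha_sort :: "nat \<Rightarrow> 'v set \<Rightarrow> (nat \<Rightarrow> 'v \<Rightarrow> real) \<Rightarrow> 'v \<Rightarrow> (nat \<Rightarrow> nat) \<Rightarrow> bool" where
  "is_alpha_sort n V psi \<alpha> ord \<longleftrightarrow>
     bij_betw ord {1..n} {1..n} \<and>
     (\<forall>p\<in>{1..n}. \<forall>q\<in>{1..n}. p \<le> q \<longrightarrow> alpha_key V psi \<alpha> (ord q) \<le> alpha_key V psi \<alpha> (ord p))"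

definition is_best_other :: "'v set \<Rightarrow> (nat \<Rightarrow> 'v \<Rightarrow> real) \<Rightarrow> nat \<Rightarrow> 'v \<Rightarrow> 'v \<Rightarrow> bool" where
  "is_best_other V psi j \<alpha> w \<longleftrightarrow> w \<in> V - {\<alpha>} \<and> (\<forall>v\<in>V - {\<alpha>}. psi j v \<le> psi j w)"

definition alpha_pass_cand :: "(nat \<Rightarrow> nat) \<Rightarrow> (nat \<Rightarrow> 'v \<Rightarrow> 'v) \<Rightarrow> 'v \<Rightarrow> nat \<Rightarrow> nat \<Rightarrow> 'v" where
  "alpha_pass_cand ord b \<alpha> k j = (if j \<in> ord ` {1..k} then \<alpha> else b j \<alpha>)"

end

theory Submission
  imports Defs
begin

lemma topk:
  fixes g :: "nat \<Rightarrow> real"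
  assumes bij: "bij_betw ord {1..n} {1..n}"
    and srt: "\<forall>p\<in>{1..n}. \<forall>q\<in>{1..n}. p \<le> q \<longrightarrow> g (ord q) \<le> g (ord p)"
    and kn: "k \<le> n" and T: "T \<subseteq> {1..n}" and cT: "card T = k"
  shows "sum g T \<le> sum g (ord ` {1..k})"
proof -
  define S where "S = ord ` {1..k}"
  have SS: "S \<subseteq> {1..n}" using bij kn unfolding S_def bij_betw_def by auto
  have cS: "card S = k" unfolding S_def using bij kn
    by (subst card_image) (auto simp: bij_betw_def intro: inj_on_subset)
  have dom: "g t \<le> g s" if st: "s \<in> S" "t \<in> {1..n} - S" for s t
  proof -
    obtain p where p: "p \<in> {1..k}" "s = ord p" using st(1) unfolding S_def by auto
    obtain q where q: "q \<in> {1..n}" "t = ord q" using st(2) bij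
      by (metis DiffD1 bij_betw_def imageE)
    have "q \<notin> {1..k}" using q st(2) S_def by auto
    hence "p \<le> q" using p q by auto
    thus ?thesis using srt p q kn by auto
  qed
  have fin: "finite T" "finite S" using T SS finite_subset by auto
  have "card (T - S) = card (S - T)"
    using fin cT cS by (metis Int_commute card_Diff_subset_Int finite_Int card_Int_Diff
      add_diff_cancel_left' )
  then obtain h where h: "bij_betw h (T - S) (S - T)"
    using fin by (metis finite_Diff finite_same_card_bij)
  have "sum g (T - S) \<le> sum (g \<circ> h) (T - S)"
  proof (rule sum_mono)
    fix t assume t: "t \<in> T - S"
    have "h t \<in> S" using h t bij_betw_apply by fastforce
    moreover have "t \<in> {1..n} - S" using t T by auto
    ultimately show "g t \<le> (g \<circ> h) t" using dom by auto
  qed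
  also have "\<dots> = sum g (S - T)" using sum.reindex_bij_betw[OF h] by simp
  finally have "sum g (T - S) \<le> sum g (S - T)" .
  moreover have "sum g T = sum g (T \<inter> S) + sum g (T - S)"
    using fin sum.Int_Diff by blast
  moreover have "sum g S = sum g (S \<inter> T) + sum g (S - T)"
    using fin sum.Int_Diff by blast
  ultimately show ?thesis unfolding S_def[symmetric] by (simp add: Int_commute)
qed

theorem theorem1:
  fixes n :: nat and V :: "'v set" and psi :: "nat \<Rightarrow> 'v \<Rightarrow> real"
    and f :: "'v \<Rightarrow> nat \<Rightarrow> real"
    and ord :: "'v \<Rightarrow> nat \<Rightarrow> nat" and b :: "nat \<Rightarrow> 'v \<Rightarrow> 'v"
    and \<alpha>0 :: 'v and k0 :: nat
  assumes finV: "finite V" and cardV: "card V \<ge> 2" and npos: "n \<ge> 1"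
    and mono_f: "\<forall>v\<in>V. mono_on {0..n} (f v)"
    and sorted: "\<forall>\<alpha>\<in>V. is_alpha_sort n V psi \<alpha> (ord \<alpha>)"
    and best: "\<forall>j\<in>{1..n}. \<forall>\<alpha>\<in>V. is_best_other V psi j \<alpha> (b j \<alpha>)"
    and out: "\<alpha>0 \<in> V" "k0 \<in> {1..n}"
    and out_max: "\<forall>\<alpha>\<in>V. \<forall>k\<in>{1..n}.
        objF n psi (max_clique_pot n V f) (alpha_pass_cand (ord \<alpha>) b \<alpha> k)
        \<le> objF n psi (max_clique_pot n V f) (alpha_pass_cand (ord \<alpha>0) b \<alpha>0 k0)"
  shows "\<forall>x\<in>assignments n V.
           objF n psi (max_clique_pot n V f) x
           \<le> objF n psi (max_clique_pot n V f) (alpha_pass_cand (ord \<alpha>0) b \<alpha>0 k0)"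
proof
  fix x assume "x \<in> assignments n V"
  hence xV: "\<And>j. j \<in> {1..n} \<Longrightarrow> x j \<in> V" unfolding assignments_def by auto
  have Vne: "V \<noteq> {}" using cardV by auto
  have "max_clique_pot n V f x \<in> (\<lambda>v. f v (val_count n x v)) ` V"
    unfolding max_clique_pot_def using finV Vne by (intro Max_in) auto
  then obtain \<alpha> where aV: "\<alpha> \<in> V" and Cx: "max_clique_pot n V f x = f \<alpha> (val_count n x \<alpha>)"
    by auto
  define \<beta> where "\<beta> = (if val_count n x \<alpha> \<ge> 1 then \<alpha> else x 1)"
  have bV: "\<beta> \<in> V" using aV xV npos \<beta>_def by auto
  define T where "T = {j\<in>{1..n}. x j = \<beta>}"
  define k where "k = card T"
  have TS: "T \<subseteq> {1..n}" unfolding T_def by auto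
  have kn: "k \<le> n" unfolding k_def using card_mono[OF _ TS] by simp
  have k1: "k \<ge> 1"
  proof (cases "val_count n x \<alpha> \<ge> 1")
    case True thus ?thesis unfolding k_def T_def \<beta>_def val_count_def by simp
  next
    case False
    hence "1 \<in> T" unfolding T_def \<beta>_def using npos by auto
    hence "T \<noteq> {}" by auto
    thus ?thesis unfolding k_def using finite_subset[OF TS] by (simp add: Suc_le_eq card_gt_0_iff)
  qed
  define cand where "cand = alpha_pass_cand (ord \<beta>) b \<beta> k"
  define S where "S = ord \<beta> ` {1..k}"
  have srt: "is_alpha_sort n V psi \<beta> (ord \<beta>)" using sorted bV by auto
  have bij: "bij_betw (ord \<beta>) {1..n} {1..n}" using srt unfolding is_alpha_sort_def by blast
  have SS: "S \<subseteq> {1..n}" using bij kn unfolding S_def bij_betw_def by auto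
  have cS: "card S = k" unfolding S_def using bij kn
    by (subst card_image) (auto simp: bij_betw_def intro: inj_on_subset)
  define M where "M j = psi j (b j \<beta>)" for j
  define key where "key j = psi j \<beta> - M j" for j
  have bo: "\<And>j. j \<in> {1..n} \<Longrightarrow> b j \<beta> \<in> V - {\<beta>} \<and> (\<forall>v\<in>V - {\<beta>}. psi j v \<le> psi j (b j \<beta>))"
    using best bV unfolding is_best_other_def by blast
  have keyeq: "alpha_key V psi \<beta> j = key j" if "j \<in> {1..n}" for j
  proof -
    have "Max (psi j ` (V - {\<beta>})) = psi j (b j \<beta>)"
      using bo[OF that] finV by (intro Max_eqI) auto
    thus ?thesis unfolding alpha_key_def key_def M_def by simp
  qed
  have srt2: "\<forall>p\<in>{1..n}. \<forall>q\<in>{1..n}. p \<le> q \<longrightarrow> key (ord \<beta> q) \<le> key (ord \<beta> p)"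
  proof (intro ballI impI)
    fix p q assume pq: "p \<in> {1..n}" "q \<in> {1..n}" "p \<le> q"
    have "ord \<beta> p \<in> {1..n}" "ord \<beta> q \<in> {1..n}" using bij pq bij_betw_apply by fastforce+
    thus "key (ord \<beta> q) \<le> key (ord \<beta> p)" using srt pq keyeq unfolding is_alpha_sort_def by metis
  qed
  have top: "sum key T \<le> sum key S"
    unfolding S_def by (rule topk[OF bij srt2 kn TS]) (simp add: k_def)
  have vx: "(\<Sum>j=1..n. psi j (x j)) \<le> (\<Sum>j=1..n. M j) + sum key T"
  proof -
    have "(\<Sum>j=1..n. psi j (x j)) \<le> (\<Sum>j=1..n. M j + (if j \<in> T then key j else 0))"
    proof (rule sum_mono)
      fix j assume j: "j \<in> {1..n}"
      show "psi j (x j) \<le> M j + (if j \<in> T then key j else 0)"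
        using bo[OF j] xV[OF j] j unfolding T_def key_def M_def by auto
    qed
    also have "\<dots> = (\<Sum>j=1..n. M j) + sum key T"
      using TS by (simp add: sum.distrib sum.inter_restrict[symmetric] Int_absorb1)
    finally show ?thesis .
  qed
  have vc: "(\<Sum>j=1..n. psi j (cand j)) = (\<Sum>j=1..n. M j) + sum key S"
  proof -
    have "(\<Sum>j=1..n. psi j (cand j)) = (\<Sum>j=1..n. M j + (if j \<in> S then key j else 0))"
      by (rule sum.cong) (auto simp: cand_def alpha_pass_cand_def S_def key_def M_def)
    also have "\<dots> = (\<Sum>j=1..n. M j) + sum key S"
      using SS by (simp add: sum.distrib sum.inter_restrict[symmetric] Int_absorb1)
    finally show ?thesis .
  qed
  have cnt: "val_count n x \<alpha> \<le> val_count n cand \<alpha>"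
  proof (cases "val_count n x \<alpha> \<ge> 1")
    case True
    hence ba: "\<beta> = \<alpha>" unfolding \<beta>_def by simp
    have "{j\<in>{1..n}. cand j = \<alpha>} = S"
      using SS bo ba unfolding cand_def alpha_pass_cand_def S_def by auto
    hence "val_count n cand \<alpha> = k" using cS val_count_def by metis
    moreover have "val_count n x \<alpha> = k" unfolding k_def T_def ba val_count_def by simp
    ultimately show ?thesis by simp
  next
    case False thus ?thesis by simp
  qed
  have cle: "val_count n cand \<alpha> \<le> n"
    unfolding val_count_def using card_mono[of "{1..n}" "{j\<in>{1..n}. cand j = \<alpha>}"] by fastforce
  have "f \<alpha> (val_count n x \<alpha>) \<le> f \<alpha> (val_count n cand \<alpha>)"
    using mono_f aV cnt cle by (auto intro: mono_onD)
  also have "\<dots> \<le> max_clique_pot n V f cand"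
    unfolding max_clique_pot_def using finV aV by (intro Max_ge) auto
  finally have "max_clique_pot n V f x \<le> max_clique_pot n V f cand" using Cx by simp
  hence "objF n psi (max_clique_pot n V f) x \<le> objF n psi (max_clique_pot n V f) cand"
    unfolding objF_def using vx vc top by linarith
  also have "\<dots> \<le> objF n psi (max_clique_pot n V f) (alpha_pass_cand (ord \<alpha>0) b \<alpha>0 k0)"
    using out_max bV k1 kn unfolding cand_def by auto
  finally show "objF n psi (max_clique_pot n V f) x
           \<le> objF n psi (max_clique_pot n V f) (alpha_pass_cand (ord \<alpha>0) b \<alpha>0 k0)" .
qed

end
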